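(* Let $M$ be a quasianalytic intersectable weight sequence. Then: (i) $n_k^{1/k}\to\infty$ for all $N\in\mathcal{L}(M)$, where $n_k=N_k/k!$. (ii) If $M$ has moderate growth, then for every $N\in\mathcal{L}(M)$ there exists $N'\in\mathcal{L}(M)$ such that $\mathrm{mg}(N',N)<\infty$.
   Context: A weight sequence is a sequence $M=(M_k)_{k\ge0}$ of positive reals with $M_k=\mu_1\cdots\mu_k$, $M_0=1$, where $(\mu_k)$ is positive and increasing with $\mu_0=1$, and $M_k^{1/k}\to\infty$. $M$ is non-quasianalytic if $\sum_{k\ge1}1/\mu_k<\infty$, quasianalytic otherwise; it has moderate growth if $\exists C>0\ \forall j,k: M_{j+k}\le C^{j+k}M_jM_k$. $\Lambda^{\{M\}}:=\{(c_k)\in\mathbb{C}^{\mathbb{N}}:\exists\rho>0,\ \sup_k|c_k|/(\rho^kM_k)<\infty\}$; $\mathcal{L}(M)$ is the set of all non-quasianalytic weight sequences $N$ with $N_k\ge M_k$ for all $k$ and $(N_k/k!)_k$ log-convex. A quasianalytic weight sequence $M$ is intersectable if $\Lambda^{\{M\}}=\bigcap_{N\in\mathcal{L}(M)}\Lambda^{\{N\}}$. $\mathrm{mg}(M,N):=\sup_{j,k\ge0,j+k\ge1}(M_{j+k}/(N_jN_k))^{1/(j+k)}\in(0,\infty]$. *)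

theory Defs
  imports "HOL-Analysis.Analysis"
begin

definition weight_seq :: "(nat \<Rightarrow> real) \<Rightarrow> bool" where
  "weight_seq M \<longleftrightarrow>
     (\<exists>\<mu>::nat \<Rightarrow> real. \<mu> 0 = 1 \<and> (\<forall>k. 0 < \<mu> k) \<and> mono \<mu> \<and>
        (\<forall>k. M k = (\<Prod>i=1..k. \<mu> i))) \<and>
     filterlim (\<lambda>k. root k (M k)) at_top sequentially"

text \<open>mu_(k+1) = M_(k+1)/M_k; quasianalytic iff sum of 1/mu_k diverges.\<close>
definition nonquasianalytic :: "(nat \<Rightarrow> real) \<Rightarrow> bool" where
  "nonquasianalytic M \<longleftrightarrow> summable (\<lambda>k. 1 / (M (Suc k) / M k))"

definition quasianalytic :: "(nat \<Rightarrow> real) \<Rightarrow> bool" where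
  "quasianalytic M \<longleftrightarrow> \<not> nonquasianalytic M"

definition moderate_growth :: "(nat \<Rightarrow> real) \<Rightarrow> bool" where
  "moderate_growth M \<longleftrightarrow> (\<exists>C>0. \<forall>j k. M (j + k) \<le> C ^ (j + k) * M j * M k)"

definition Lambda_Roumieu :: "(nat \<Rightarrow> real) \<Rightarrow> (nat \<Rightarrow> complex) set" where
  "Lambda_Roumieu M = {c. \<exists>\<rho>>0. bdd_above (range (\<lambda>k. norm (c k) / (\<rho> ^ k * M k)))}"

definition log_convex_seq :: "(nat \<Rightarrow> real) \<Rightarrow> bool" where
  "log_convex_seq a \<longleftrightarrow> (\<forall>k. (a (Suc k))\<^sup>2 \<le> a k * a (Suc (Suc k)))"

definition LL :: "(nat \<Rightarrow> real) \<Rightarrow> (nat \<Rightarrow> real) set" where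
  "LL M = {N. weight_seq N \<and> nonquasianalytic N \<and> (\<forall>k. M k \<le> N k) \<and>
              log_convex_seq (\<lambda>k. N k / fact k)}"

definition intersectable :: "(nat \<Rightarrow> real) \<Rightarrow> bool" where
  "intersectable M \<longleftrightarrow> weight_seq M \<and> quasianalytic M \<and>
     Lambda_Roumieu M = (\<Inter>N\<in>LL M. Lambda_Roumieu N)"

definition mg :: "(nat \<Rightarrow> real) \<Rightarrow> (nat \<Rightarrow> real) \<Rightarrow> ereal" where
  "mg M N = (SUP p \<in> {(j, k). 1 \<le> j + k}.
      ereal (root (fst p + snd p) (M (fst p + snd p) / (N (fst p) * N (snd p)))))"

end

theory Submission
  imports Defs
begin

lemma ws_basic:
  assumes "weight_seq N"
  shows "\<forall>k. 0 < N k" "N 0 = 1" "1 \<le> N 1"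
proof -
  obtain \<mu> where mu: "\<mu> 0 = 1" "\<forall>k. 0 < \<mu> k" "mono \<mu>" "\<forall>k. N k = (\<Prod>i=1..k. \<mu> i)"
    using assms unfolding weight_seq_def by blast
  show "\<forall>k. 0 < N k" using mu by (simp add: prod_pos)
  show "N 0 = 1" using mu by simp
  have "\<mu> 0 \<le> \<mu> 1" using mu(3) by (simp add: monoD)
  then show "1 \<le> N 1" using mu by simp
qed

lemma lc_ratio:
  assumes pos: "\<And>k. 0 < a k" and lc: "log_convex_seq a"
  shows "a (Suc k) / a k \<le> a (Suc (Suc k)) / a (Suc k)"
proof -
  have "(a (Suc k))\<^sup>2 \<le> a k * a (Suc (Suc k))" using lc unfolding log_convex_seq_def by blast
  then show ?thesis using pos[of k] pos[of "Suc k"]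
    by (simp add: divide_simps power2_eq_square mult.commute)
qed

lemma lc_ratio_mono:
  assumes pos: "\<And>k. 0 < a k" and lc: "log_convex_seq a" and "k \<le> l"
  shows "a (Suc k) / a k \<le> a (Suc l) / a l"
proof -
  have "incseq (\<lambda>k. a (Suc k) / a k)" by (rule incseq_SucI) (rule lc_ratio[OF pos lc])
  then show ?thesis using incseqD[OF _ assms(3)] by blast
qed

lemma bal:
  assumes pos: "\<And>k. 0 < a k" and lc: "log_convex_seq a"
  shows "a (j + d div 2) * a (j + d - d div 2) \<le> a j * a (j + d)"
proof (induction d arbitrary: j rule: less_induct)
  case (less d)
  show ?case
  proof (cases d)
    case 0 then show ?thesis by simp
  next
    case (Suc e)
    show ?thesis
    proof (cases e)
      case 0 then show ?thesis using Suc by simp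
    next
      case (Suc f)
      have d: "d = Suc (Suc f)" using Suc \<open>d = Suc e\<close> by simp
      have IH: "a (Suc j + f div 2) * a (Suc j + f - f div 2) \<le> a (Suc j) * a (Suc j + f)"
        using less[of f "Suc j"] d by simp
      have r: "a (Suc j) / a j \<le> a (Suc (Suc j + f)) / a (Suc j + f)"
        by (rule lc_ratio_mono[OF pos lc]) simp
      have "a (Suc j) * a (Suc j + f) \<le> a j * a (Suc (Suc j + f))"
        using r pos[of j] pos[of "Suc j + f"] by (simp add: divide_simps mult.commute)
      moreover have "j + d div 2 = Suc j + f div 2" "j + d - d div 2 = Suc j + f - f div 2"
        "j + d = Suc (Suc j + f)" using d by auto
      ultimately show ?thesis using IH by simp
    qed
  qed
qed

lemma summable_div2:
  fixes f :: "nat \<Rightarrow> real"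
  assumes sf: "summable f" and nn: "\<And>k. 0 \<le> f k"
  shows "summable (\<lambda>k. f (k div 2))"
proof (rule bounded_imp_summable)
  show "0 \<le> f (k div 2)" for k using nn by simp
  have eq: "sum (\<lambda>k. f (k div 2)) {..<2*n} = 2 * sum f {..<n}" for n
  proof (induction n)
    case 0 then show ?case by simp
  next
    case (Suc n)
    have "2 * Suc n = Suc (Suc (2*n))" by simp
    then show ?case using Suc by simp
  qed
  fix n
  have "sum (\<lambda>k. f (k div 2)) {..n} \<le> sum (\<lambda>k. f (k div 2)) {..<2*(Suc n)}"
    by (rule sum_mono2) (auto simp: nn)
  also have "\<dots> = 2 * sum f {..<Suc n}" by (rule eq)
  also have "\<dots> \<le> 2 * suminf f" using sum_le_suminf[OF sf, of "{..<Suc n}"] nn by simp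
  finally show "sum (\<lambda>k. f (k div 2)) {..n} \<le> 2 * suminf f" .
qed

lemma ws_from:
  assumes pos: "\<And>k. 0 < P k" and P0: "P 0 = 1" and P1: "1 \<le> P 1"
    and lc: "log_convex_seq (\<lambda>k. P k / fact k)"
    and lim: "filterlim (\<lambda>k. root k (P k)) at_top sequentially"
  shows "weight_seq P"
proof -
  define \<mu> where "\<mu> k = (if k = 0 then 1 else P k / P (k - 1))" for k
  have prod: "P k = (\<Prod>i=1..k. \<mu> i)" for k
  proof (induction k)
    case 0 then show ?case using P0 by simp
  next
    case (Suc k)
    have "(\<Prod>i=1..Suc k. \<mu> i) = \<mu> (Suc k) * (\<Prod>i=1..k. \<mu> i)" by (simp add: prod.nat_ivl_Suc')
    also have "\<dots> = P (Suc k) / P k * P k" using Suc by (simp add: \<mu>_def)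
    also have "\<dots> = P (Suc k)" using pos[of k] by simp
    finally show ?case by simp
  qed
  have mpos: "0 < \<mu> k" for k using pos by (simp add: \<mu>_def)
  have "\<mu> k \<le> \<mu> (Suc k)" for k
  proof (cases k)
    case 0 then show ?thesis using P0 P1 by (simp add: \<mu>_def)
  next
    case (Suc j)
    have fpos: "\<And>k. 0 < P k / fact k" using pos by simp
    have h: "(P (Suc j) / fact (Suc j)) / (P j / fact j)
        \<le> (P (Suc (Suc j)) / fact (Suc (Suc j))) / (P (Suc j) / fact (Suc j))"
      by (rule lc_ratio[OF fpos lc])
    define x where "x = P (Suc j) / P j"
    define y where "y = P (Suc (Suc j)) / P (Suc j)"
    define F where "F = (fact j :: real)"
    have F: "0 < F" by (simp add: F_def)
    have f1: "fact (Suc j) = (real j + 1) * F" by (simp add: F_def fact_Suc)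
    have f2: "fact (Suc (Suc j)) = (real j + 2) * ((real j + 1) * F)" by (simp add: F_def algebra_simps)
    have pj: "0 < P j" "0 < P (Suc j)" using pos by auto
    have e1: "(P (Suc j) / fact (Suc j)) / (P j / fact j) = x / (real j + 1)"
      unfolding f1 F_def[symmetric] x_def using F pj by (simp add: divide_simps)
    have e2: "(P (Suc (Suc j)) / fact (Suc (Suc j))) / (P (Suc j) / fact (Suc j)) = y / (real j + 2)"
      unfolding f1 f2 y_def using F pj by (simp add: divide_simps)
    have xy: "x / (real j + 1) \<le> y / (real j + 2)" using h e1 e2 by simp
    have "0 < y" using pos by (simp add: y_def)
    have "x = (x / (real j + 1)) * (real j + 1)" by simp
    also have "\<dots> \<le> (y / (real j + 2)) * (real j + 1)"
      by (rule mult_right_mono[OF xy]) simp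
    also have "\<dots> \<le> (y / (real j + 2)) * (real j + 2)"
      by (rule mult_left_mono) (use \<open>0 < y\<close> in simp_all)
    also have "\<dots> = y" by simp
    finally show ?thesis using Suc by (simp add: \<mu>_def x_def y_def)
  qed
  then have "mono \<mu>" by (simp add: incseq_SucI)
  moreover have "\<mu> 0 = 1" by (simp add: \<mu>_def)
  ultimately show ?thesis unfolding weight_seq_def using prod mpos lim by blast
qed


lemma LL_basic:
  assumes N: "N \<in> LL M"
    and n_def: "n = (\<lambda>k. N k / fact k)"
  shows "\<And>k. 0 < N k" "N 0 = 1" "1 \<le> N 1" "\<And>k. 0 < n k" "log_convex_seq n"
    "\<And>k l. k \<le> l \<Longrightarrow> n (Suc k) / n k \<le> n (Suc l) / n l"
    "\<And>k. N (Suc k) = (real k + 1) * (n (Suc k) / n k) * N k"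
    "summable (\<lambda>k. N k / N (Suc k))" "\<And>k. M k \<le> N k" "weight_seq N"
proof -
  have ws: "weight_seq N" and nq: "nonquasianalytic N" and lc: "log_convex_seq (\<lambda>k. N k / fact k)"
    and MN: "\<forall>k. M k \<le> N k"
    using N by (auto simp: LL_def)
  note b = ws_basic[OF ws]
  show Npos: "\<And>k. 0 < N k" "N 0 = 1" "1 \<le> N 1" using b by auto
  show npos: "\<And>k. 0 < n k" using b by (simp add: n_def)
  show lcn: "log_convex_seq n" using lc by (simp add: n_def)
  show "\<And>k l. k \<le> l \<Longrightarrow> n (Suc k) / n k \<le> n (Suc l) / n l"
    by (rule lc_ratio_mono[OF npos lcn])
  show "N (Suc k) = (real k + 1) * (n (Suc k) / n k) * N k" for k
  proof -
    have "0 < N k" "(0::real) < fact k" using Npos by auto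
    then show ?thesis unfolding n_def by (simp add: fact_Suc divide_simps)
  qed
  show "summable (\<lambda>k. N k / N (Suc k))" using nq unfolding nonquasianalytic_def by simp
  show "\<And>k. M k \<le> N k" using MN by auto
  show "weight_seq N" by (rule ws)
qed

lemma part_i:
  assumes N: "N \<in> LL M"
  shows "filterlim (\<lambda>k. root k (N k / fact k)) at_top sequentially"
proof -
  define n where "n = (\<lambda>k. N k / fact k)"
  note B = LL_basic[OF N n_def]
  define r where "r k = n (Suc k) / n k" for k
  have rmono: "k \<le> l \<Longrightarrow> r k \<le> r l" for k l unfolding r_def by (rule B(6))
  have rpos: "0 < r k" for k using B(4) by (simp add: r_def)
  have sum: "summable (\<lambda>k. 1 / ((real k + 1) * r k))"
  proof -
    have "N k / N (Suc k) = 1 / ((real k + 1) * r k)" for k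
      using B(1)[of k] by (subst B(7)) (simp add: r_def)
    then show ?thesis using B(8) by simp
  qed
  have rinf: "\<exists>k0. \<forall>k\<ge>k0. A \<le> r k" for A
  proof (rule ccontr)
    assume H: "\<not> ?thesis"
    have lt: "r k < A" for k
    proof (rule ccontr)
      assume "\<not> r k < A"
      then have "\<forall>k'\<ge>k. A \<le> r k'" using rmono by (meson not_le order_trans)
      then show False using H by blast
    qed
    then have Apos: "0 < A" using rpos[of 0] lt[of 0] by linarith
    have "summable (\<lambda>k. 1 / ((real k + 1) * A))"
    proof (rule summable_comparison_test'[OF sum])
      fix k :: nat assume "0 \<le> k"
      have "(real k + 1) * r k \<le> (real k + 1) * A" using lt[of k] by simp
      then show "norm (1 / ((real k + 1) * A)) \<le> 1 / ((real k + 1) * r k)"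
        using rpos[of k] Apos by (simp add: frac_le)
    qed
    then have "summable (\<lambda>k. A * (1 / ((real k + 1) * A)))" by (rule summable_mult)
    moreover have "(\<lambda>k. A * (1 / ((real k + 1) * A))) = (\<lambda>k. inverse (of_nat (Suc k)))"
    proof
      fix k
      have "0 < (real k + 1) * A" using Apos by simp
      then show "A * (1 / ((real k + 1) * A)) = inverse (of_nat (Suc k))"
        using Apos by (simp add: field_simps)
    qed
    ultimately have "summable (\<lambda>k. inverse (of_nat (Suc k) :: real))" by simp
    then have "summable (\<lambda>k. inverse (of_nat k :: real))" using summable_Suc_iff[of "\<lambda>k. inverse (of_nat k :: real)"] by simp
    then show False using not_summable_harmonic by blast
  qed
  show ?thesis unfolding filterlim_at_top
  proof
    fix Z :: real
    define A where "A = max Z 1"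
    have A1: "1 \<le> A" by (simp add: A_def)
    obtain k0 where k0: "\<forall>k\<ge>k0. 2*A \<le> r k" using rinf by blast
    have grow: "n k0 * (2*A)^i \<le> n (k0 + i)" for i
    proof (induction i)
      case 0 then show ?case by simp
    next
      case (Suc i)
      have "n (k0 + Suc i) = r (k0 + i) * n (k0 + i)" using B(4)[of "k0+i"] by (simp add: r_def)
      also have "\<dots> \<ge> (2*A) * (n k0 * (2*A)^i)"
        by (rule mult_mono) (use k0 Suc A1 B(4) rpos[of "k0+i"] in \<open>auto intro!: mult_nonneg_nonneg less_imp_le\<close>)
      finally show ?case by (simp add: mult_ac)
    qed
    define c where "c = n k0 / (2*A)^k0"
    have cpos: "0 < c" using B(4) A1 by (simp add: c_def)
    have ev1: "eventually (\<lambda>k. 1/2 < root k c) sequentially"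
      using order_tendstoD(1)[OF LIMSEQ_root_const[OF cpos], of "1/2"] by simp
    have ev2: "eventually (\<lambda>k. max k0 1 \<le> k) sequentially" by (rule eventually_ge_at_top)
    show "eventually (\<lambda>k. Z \<le> root k (N k / fact k)) sequentially"
      using ev1 ev2
    proof eventually_elim
      case (elim k)
      then have k: "k0 \<le> k" "0 < k" by auto
      have "c * (2*A)^k = n k0 * (2*A)^(k - k0)"
        using k A1 by (simp add: c_def power_diff)
      also have "\<dots> \<le> n k" using grow[of "k - k0"] k by simp
      finally have le: "c * (2*A)^k \<le> n k" .
      have "root k (c * (2*A)^k) = root k c * (2*A)"
        using k A1 by (simp add: real_root_mult real_root_power_cancel)
      also have "\<dots> \<ge> 1/2 * (2*A)" using elim A1 by (intro mult_right_mono) auto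
      finally have "A \<le> root k (c * (2*A)^k)" by simp
      also have "\<dots> \<le> root k (n k)" using le k by (simp add: real_root_le_mono)
      finally show ?case by (simp add: A_def n_def)
    qed
  qed
qed


lemma fact_le_aux:
  shows "(fact a * fact b :: real) \<le> fact (a+b)"
    and "(fact (a+b) :: real) \<le> 2^(a+b) * (fact a * fact b)"
proof -
  have e: "fact a * fact b * ((a+b) choose a) = (fact (a+b) :: nat)"
    using binomial_fact_lemma[of a "a+b"] by simp
  have "0 < (a+b) choose a" by (rule zero_less_binomial) simp
  then have c1: "1 \<le> (a+b) choose a" by linarith
  have c2: "(a+b) choose a \<le> 2^(a+b)" by (rule binomial_le_pow2)
  have "fact a * fact b * 1 \<le> fact a * fact b * ((a+b) choose a)"
    using c1 by (intro mult_left_mono) auto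
  then have "fact a * fact b \<le> (fact (a+b) :: nat)" using e by simp
  then have "real (fact a * fact b) \<le> real (fact (a+b))" by (simp only: of_nat_le_iff)
  then show "(fact a * fact b :: real) \<le> fact (a+b)" by (simp add: of_nat_fact)
  have "fact a * fact b * ((a+b) choose a) \<le> fact a * fact b * 2^(a+b)"
    using c2 by (intro mult_left_mono) auto
  then have "(fact (a+b) :: nat) \<le> fact a * fact b * 2^(a+b)" unfolding e .
  then have "(fact (a+b) :: nat) \<le> 2^(a+b) * (fact a * fact b)" by (metis mult.commute)
  then have "real (fact (a+b)) \<le> real (2^(a+b) * (fact a * fact b))" by (simp only: of_nat_le_iff)
  then show "(fact (a+b) :: real) \<le> 2^(a+b) * (fact a * fact b)" by (simp add: of_nat_fact)
qed

lemma part_ii: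
  assumes Mws: "weight_seq M" and mgM: "moderate_growth M" and N: "N \<in> LL M"
  shows "\<exists>N'\<in>LL M. mg N' N < \<infinity>"
proof -
  obtain C where C: "C > 0" "\<And>j k. M (j + k) \<le> C ^ (j + k) * M j * M k"
    using mgM unfolding moderate_growth_def by auto
  define D where "D = max C 1"
  have D1: "1 \<le> D" and CD: "C \<le> D" by (auto simp: D_def)
  define n where "n = (\<lambda>k. N k / fact k)"
  note B = LL_basic[OF N n_def]
  have Mpos: "\<And>k. 0 < M k" using ws_basic(1)[OF Mws] by auto
  have Mlim: "filterlim (\<lambda>k. root k (M k)) at_top sequentially"
    using Mws unfolding weight_seq_def by blast
  define r where "r k = n (Suc k) / n k" for k
  have rpos: "0 < r k" for k using B(4) by (simp add: r_def)
  have rmono: "k \<le> l \<Longrightarrow> r k \<le> r l" for k l unfolding r_def by (rule B(6))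
  define g where "g m = n (m div 2) * n (m - m div 2)" for m
  define N' where "N' m = D^m * fact m * g m" for m
  have gpos: "0 < g m" for m using B(4) by (simp add: g_def)
  have N'pos: "0 < N' m" for m using gpos D1 by (simp add: N'_def)
  have n0: "n 0 = 1" using B(2) by (simp add: n_def)
  have gstep: "g (Suc m) = r (m div 2) * g m" for m
  proof -
    have "\<exists>j. m = 2*j \<or> m = Suc (2*j)" by presburger
    then obtain j where "m = 2*j \<or> m = Suc (2*j)" by blast
    then show ?thesis
    proof
      assume m: "m = 2*j"
      have "Suc m div 2 = j" "Suc m - Suc m div 2 = Suc j" "m div 2 = j" "m - m div 2 = j"
        using m by auto
      then show ?thesis using B(4)[of j] by (simp add: g_def r_def)
    next
      assume m: "m = Suc (2*j)"
      have "Suc m div 2 = Suc j" "Suc m - Suc m div 2 = Suc j" "m div 2 = j" "m - m div 2 = Suc j"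
        using m by auto
      then show ?thesis using B(4)[of j] by (simp add: g_def r_def)
    qed
  qed
  have N'step: "N' (Suc m) = D * (real m + 1) * r (m div 2) * N' m" for m
    by (simp add: N'_def gstep fact_Suc mult_ac)
  have N'0: "N' 0 = 1" using n0 by (simp add: N'_def g_def)
  have N'1: "1 \<le> N' 1"
  proof -
    have "N' 1 = D * N 1" using n0 by (simp add: N'_def g_def n_def)
    moreover have "1 * 1 \<le> D * N 1" using D1 B(3) by (intro mult_mono) auto
    ultimately show ?thesis by simp
  qed
  define h where "h k = N' k / fact k" for k
  have hpos: "0 < h k" for k using N'pos by (simp add: h_def)
  have hstep: "h (Suc k) = D * r (k div 2) * h k" for k
  proof -
    have f: "fact (Suc k) = (real k + 1) * (fact k::real)" by (simp add: algebra_simps)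
    have nz: "real k + 1 \<noteq> 0" "(fact k::real) \<noteq> 0" by auto
    have "h (Suc k) = ((real k + 1) * (D * r (k div 2) * N' k)) / ((real k + 1) * fact k)"
      unfolding h_def N'step f by (simp add: mult_ac)
    also have "\<dots> = (D * r (k div 2) * N' k) / fact k"
      by (rule nonzero_mult_divide_mult_cancel_left[OF nz(1)])
    finally show ?thesis by (simp add: h_def)
  qed
  have lc': "log_convex_seq (\<lambda>k. N' k / fact k)"
    unfolding log_convex_seq_def h_def[symmetric]
  proof
    fix k
    have rr: "r (k div 2) \<le> r (Suc k div 2)" by (rule rmono) simp
    have "(h (Suc k))\<^sup>2 = h (Suc k) * (D * r (k div 2) * h k)"
      by (simp add: power2_eq_square hstep[of k])
    also have "\<dots> \<le> h (Suc k) * (D * r (Suc k div 2) * h k)"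
      using rr hpos[of k] hpos[of "Suc k"] D1 by (intro mult_left_mono) auto
    also have "\<dots> = h k * h (Suc (Suc k))" by (simp add: hstep[of "Suc k"] mult_ac)
    finally show "(h (Suc k))\<^sup>2 \<le> h k * h (Suc (Suc k))" .
  qed
  have low: "M m \<le> N' m" for m
  proof -
    define a where "a = m div 2"
    define b where "b = m - m div 2"
    have ab: "m = a + b" by (simp add: a_def b_def)
    have "M m \<le> C ^ m * M a * M b" using C(2)[of a b] ab by simp
    also have "\<dots> \<le> D ^ m * N a * N b"
      using CD C(1) Mpos[of a] Mpos[of b] B(9)[of a] B(9)[of b]
      by (intro mult_mono power_mono) auto
    also have "\<dots> = D ^ m * (fact a * fact b) * g m"
    proof -
      have g: "g m = n a * n b" by (simp add: g_def a_def b_def)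
      have Na: "N a = fact a * n a" "N b = fact b * n b" by (simp_all add: n_def)
      show ?thesis unfolding g Na by (simp add: mult_ac)
    qed
    also have "\<dots> \<le> D ^ m * fact m * g m"
      using fact_le_aux(1)[of a b] ab gpos[of m] D1 by (intro mult_right_mono mult_left_mono) auto
    finally show ?thesis by (simp add: N'_def)
  qed
  have gbal: "g (j+k) \<le> n j * n k" for j k
  proof -
    have *: "g (j+k) \<le> n j * n k" if "j \<le> k" for j k
    proof -
      define d where "d = k - j"
      have "(j+k) div 2 = j + d div 2" "j + k - (j+k) div 2 = j + d - d div 2" "k = j + d"
        using that by (auto simp: d_def)
      then show ?thesis using bal[OF B(4) B(5), of j d] by (simp add: g_def)
    qed
    show ?thesis
    proof (cases "j \<le> k")
      case True then show ?thesis by (rule *)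
    next
      case False
      then have "g (k+j) \<le> n k * n j" by (intro *) simp
      then show ?thesis by (simp add: add.commute mult.commute)
    qed
  qed
  have up: "N' (j+k) \<le> (2*D)^(j+k) * (N j * N k)" for j k
  proof -
    have "N' (j+k) = D^(j+k) * fact (j+k) * g (j+k)" by (simp add: N'_def)
    also have "\<dots> \<le> D^(j+k) * (2^(j+k) * (fact j * fact k)) * (n j * n k)"
      using fact_le_aux(2)[of j k] gbal[of j k] gpos[of "j+k"] D1
      by (intro mult_mono mult_left_mono) auto
    also have "\<dots> = (2*D)^(j+k) * (N j * N k)"
      by (simp add: n_def power_mult_distrib mult_ac)
    finally show ?thesis .
  qed
  have lim': "filterlim (\<lambda>k. root k (N' k)) at_top sequentially"
  proof (rule filterlim_at_top_mono[OF Mlim])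
    show "\<forall>\<^sub>F k in sequentially. root k (M k) \<le> root k (N' k)"
    proof (rule always_eventually, rule allI)
      fix k :: nat
      show "root k (M k) \<le> root k (N' k)"
        by (cases "k = 0") (auto intro: real_root_le_mono low)
    qed
  qed
  have nq': "nonquasianalytic N'"
    unfolding nonquasianalytic_def
  proof (rule summable_comparison_test'[OF summable_div2[OF B(8)]])
    show "0 \<le> N k / N (Suc k)" for k using B(1)[of k] B(1)[of "Suc k"] by simp
    fix k :: nat
    assume "0 \<le> k"
    define j where "j = k div 2"
    have t: "1 / (N' (Suc k) / N' k) = 1 / (D * (real k + 1) * r j)"
      using N'pos[of k] unfolding N'step j_def by simp
    have jk: "real j + 1 \<le> real k + 1" by (simp add: j_def)
    also have "\<dots> = 1 * (real k + 1)" by simp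
    also have "\<dots> \<le> D * (real k + 1)" by (rule mult_right_mono[OF D1]) simp
    finally have jk2: "real j + 1 \<le> D * (real k + 1)" .
    have le: "(real j + 1) * r j \<le> D * (real k + 1) * r j"
      using rpos[of j] jk2 by (intro mult_right_mono) auto
    have p: "0 < (real j + 1) * r j" using rpos[of j] by simp
    have "1 / (D * (real k + 1) * r j) \<le> 1 / ((real j + 1) * r j)"
      by (rule frac_le[OF _ _ p le]) simp_all
    also have "\<dots> = N j / N (Suc j)"
      using B(1)[of j] by (subst B(7)) (simp add: r_def)
    finally have "1 / (N' (Suc k) / N' k) \<le> N j / N (Suc j)" unfolding t .
    moreover have "0 \<le> 1 / (N' (Suc k) / N' k)" using N'pos[of k] N'pos[of "Suc k"] by simp
    ultimately show "norm (1 / (N' (Suc k) / N' k)) \<le> N (k div 2) / N (Suc (k div 2))"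
      unfolding j_def by simp
  qed
  have ws': "weight_seq N'" by (rule ws_from[OF N'pos N'0 N'1 lc' lim'])
  have inLL: "N' \<in> LL M" unfolding LL_def using ws' nq' low lc' by blast
  have "mg N' N \<le> ereal (2*D)"
    unfolding mg_def
  proof (rule SUP_least)
    fix p :: "nat \<times> nat" assume "p \<in> {(j, k). 1 \<le> j + k}"
    then obtain j k where p: "p = (j, k)" and jk1: "1 \<le> j + k" by blast
    have jk: "0 < j + k" using jk1 by linarith
    have pos: "0 < N j * N k" using B(1) by simp
    have "N' (j+k) / (N j * N k) \<le> (2*D)^(j+k)"
      using up[of j k] pos by (simp add: divide_simps)
    then have "root (j+k) (N' (j+k) / (N j * N k)) \<le> root (j+k) ((2*D)^(j+k))"
      by (rule real_root_le_mono[OF jk])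
    also have "\<dots> = 2*D" by (rule real_root_power_cancel[OF jk]) (use D1 in simp)
    finally show "ereal (root (fst p + snd p) (N' (fst p + snd p) / (N (fst p) * N (snd p)))) \<le> ereal (2*D)"
      using p by simp
  qed
  moreover have "ereal (2*D) < \<infinity>" by simp
  ultimately have "mg N' N < \<infinity>" by (rule le_less_trans)
  then show ?thesis using inLL by blast
qed

theorem lemma6p3:
  fixes M :: "nat \<Rightarrow> real"
  assumes "weight_seq M" and "quasianalytic M" and "intersectable M"
  shows "(\<forall>N\<in>LL M. filterlim (\<lambda>k. root k (N k / fact k)) at_top sequentially)
       \<and> (moderate_growth M \<longrightarrow> (\<forall>N\<in>LL M. \<exists>N'\<in>LL M. mg N' N < \<infinity>))"
proof (intro conjI impI ballI)
  fix N assume "N \<in> LL M"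
  then show "filterlim (\<lambda>k. root k (N k / fact k)) at_top sequentially" by (rule part_i)
next
  fix N assume "moderate_growth M" "N \<in> LL M"
  then show "\<exists>N'\<in>LL M. mg N' N < \<infinity>" by (rule part_ii[OF assms(1)])
qed

end
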